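(* Let $\mu,\gamma>0$ and define for $x\ge0$ $$h(x)=e^{-\gamma x/\mu-\mu x^2}\,U\Big(-\frac{\gamma^2}{4\mu^3}+\frac12,\frac12,\Big(\frac{\gamma}{\mu^{3/2}}+\sqrt\mu\,x\Big)^2\Big).$$ Then (i) $h$ is positive on $[0,\infty)$; (ii) $h''(0)=0$; (iii) $\int_0^\infty h(x)\,dx<\infty$; (iv) $h'(x)<0$ for all $x>0$.
   Context: Kummer's function is $M(a,b,x)=\sum_{n\ge0}\frac{(a)_n}{(b)_n}\frac{x^n}{n!}$ with $(a)_0=1$, $(a)_n=a(a+1)\cdots(a+n-1)$. The Tricomi confluent hypergeometric function is, for $b\notin\mathbb Z$, $U(a,b,x)=\frac{\Gamma(1-b)}{\Gamma(a-b+1)}M(a,b,x)+\frac{\Gamma(b-1)}{\Gamma(a)}x^{1-b}M(1+a-b,2-b,x)$ (with $1/\Gamma$ at poles of $\Gamma$ equal to $0$); it solves $xz''+(b-x)z'-az=0$ and $U(a,b,x)\sim x^{-a}$ as $x\to\infty$. *)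

theory Defs
  imports "HOL-Analysis.Analysis"
begin

definition kummerM :: "real \<Rightarrow> real \<Rightarrow> real \<Rightarrow> real" where
  "kummerM a b x = (\<Sum>n. pochhammer a n / pochhammer b n * x ^ n / fact n)"

text \<open>Tricomi's function U(a,b,x) for b not an integer (and x > 0), via the
  connection formula; 1/Gamma is rGamma, which vanishes at the poles of Gamma.\<close>
definition tricomiU :: "real \<Rightarrow> real \<Rightarrow> real \<Rightarrow> real" where
  "tricomiU a b x =
     Gamma (1 - b) * rGamma (a - b + 1) * kummerM a b x
   + Gamma (b - 1) * rGamma a * x powr (1 - b) * kummerM (1 + a - b) (2 - b) x"

end

theory Submission
  imports Defs
begin


lemma kummer_summable:
  fixes a b x :: real
  assumes b: "b > 0"
  shows "summable (\<lambda>n. pochhammer a n / pochhammer b n * x ^ n / fact n)"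
proof (rule summable_ratio_test[where c="1/2" and N="nat \<lceil>2 * (\<bar>a\<bar> / b + 1) * \<bar>x\<bar>\<rceil>"])
  fix n :: nat assume n: "nat \<lceil>2 * (\<bar>a\<bar> / b + 1) * \<bar>x\<bar>\<rceil> \<le> n"
  have pb: "pochhammer b n > 0" "pochhammer b (Suc n) > 0" using b by (auto intro: pochhammer_pos)
  have eq: "pochhammer a (Suc n) / pochhammer b (Suc n) * x ^ Suc n / fact (Suc n)
      = (pochhammer a n / pochhammer b n * x ^ n / fact n) * ((a + n) * x / ((b + n) * (n + 1)))"
    using pb by (simp add: pochhammer_rec' field_simps)
  have "\<bar>a + n\<bar> \<le> (\<bar>a\<bar> / b + 1) * (b + n)"
  proof -
    have "\<bar>a + n\<bar> \<le> \<bar>a\<bar> + n" by simp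
    also have "\<dots> \<le> (\<bar>a\<bar> / b + 1) * (b + n)"
      using b by (simp add: field_simps)
    finally show ?thesis .
  qed
  moreover have "2 * (\<bar>a\<bar> / b + 1) * \<bar>x\<bar> \<le> n" using n by linarith
  ultimately have "\<bar>a + n\<bar> * \<bar>x\<bar> \<le> (b + n) * (n + 1) / 2"
  proof -
    assume h1: "\<bar>a + n\<bar> \<le> (\<bar>a\<bar> / b + 1) * (b + n)" and h2: "2 * (\<bar>a\<bar> / b + 1) * \<bar>x\<bar> \<le> n"
    have "\<bar>a + n\<bar> * \<bar>x\<bar> \<le> (\<bar>a\<bar> / b + 1) * (b + n) * \<bar>x\<bar>" using h1 by (simp add: mult_right_mono)
    also have "\<dots> = (b + n) * ((\<bar>a\<bar> / b + 1) * \<bar>x\<bar>)" by simp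
    also have "\<dots> \<le> (b + n) * (n / 2)" using h2 b by (intro mult_left_mono) (auto simp: algebra_simps)
    also have "\<dots> \<le> (b + n) * (n + 1) / 2" using b by (simp add: field_simps)
    finally show ?thesis .
  qed
  hence "\<bar>(a + n) * x / ((b + n) * (n + 1))\<bar> \<le> 1/2"
    using b by (simp add: abs_mult abs_divide divide_le_eq)
  hence "\<bar>(pochhammer a n / pochhammer b n * x ^ n / fact n) * ((a + n) * x / ((b + n) * (n + 1)))\<bar>
      \<le> \<bar>pochhammer a n / pochhammer b n * x ^ n / fact n\<bar> * (1/2)"
    unfolding abs_mult by (rule mult_left_mono) auto
  thus "norm (pochhammer a (Suc n) / pochhammer b (Suc n) * x ^ Suc n / fact (Suc n))
        \<le> 1 / 2 * norm (pochhammer a n / pochhammer b n * x ^ n / fact n)"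
    unfolding eq real_norm_def by simp
qed simp



definition vc :: "real \<Rightarrow> nat \<Rightarrow> real" where
 "vc b n = (if even n then sqrt pi * rGamma (b + 1/2) *
     (pochhammer b (n div 2) / pochhammer (1/2) (n div 2) / fact (n div 2))
   else - 2 * sqrt pi * rGamma b *
     (pochhammer (b + 1/2) (n div 2) / pochhammer (3/2) (n div 2) / fact (n div 2)))"

definition KV :: "real \<Rightarrow> real \<Rightarrow> real" where
 "KV b t = sqrt pi * rGamma (b + 1/2) * kummerM b (1/2) (t^2)
          - 2 * sqrt pi * rGamma b * t * kummerM (b + 1/2) (3/2) (t^2)"

lemma kummer_sums:
  assumes "b > 0"
  shows "(\<lambda>n. pochhammer a n / pochhammer b n / fact n * x ^ n) sums kummerM a b x"
proof -
  have "(\<lambda>n. pochhammer a n / pochhammer b n * x ^ n / fact n) sums kummerM a b x"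
    unfolding kummerM_def using kummer_summable[OF assms] by (rule summable_sums)
  thus ?thesis by (simp add: field_simps)
qed

lemma vc_sums: "(\<lambda>n. vc b n * t ^ n) sums KV b t"
proof -
  define f where "f m = vc b (2*m) * t^(2*m)" for m
  define g where "g m = vc b (2*m+1) * t^(2*m+1)" for m
  have "f sums (sqrt pi * rGamma (b + 1/2) * kummerM b (1/2) (t^2))"
  proof -
    have "(\<lambda>m. sqrt pi * rGamma (b + 1/2) * (pochhammer b m / pochhammer (1/2) m / fact m * (t^2) ^ m))
       sums (sqrt pi * rGamma (b + 1/2) * kummerM b (1/2) (t^2))"
      by (intro sums_mult kummer_sums) simp
    moreover have "f = (\<lambda>m. sqrt pi * rGamma (b + 1/2) * (pochhammer b m / pochhammer (1/2) m / fact m * (t^2) ^ m))"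
      by (auto simp: f_def vc_def power_mult)
    ultimately show ?thesis by simp
  qed
  moreover have "g sums (- 2 * sqrt pi * rGamma b * t * kummerM (b + 1/2) (3/2) (t^2))"
  proof -
    have "(\<lambda>m. - 2 * sqrt pi * rGamma b * t * (pochhammer (b + 1/2) m / pochhammer (3/2) m / fact m * (t^2) ^ m))
       sums (- 2 * sqrt pi * rGamma b * t * kummerM (b + 1/2) (3/2) (t^2))"
      by (intro sums_mult kummer_sums) simp
    moreover have "g = (\<lambda>m. - 2 * sqrt pi * rGamma b * t * (pochhammer (b + 1/2) m / pochhammer (3/2) m / fact m * (t^2) ^ m))"
      by (auto simp: g_def vc_def power_mult)
    ultimately show ?thesis by simp
  qed
  ultimately have "(\<lambda>n. if even n then f (n div 2) else g ((n - 1) div 2)) sums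
      (- 2 * sqrt pi * rGamma b * t * kummerM (b + 1/2) (3/2) (t^2) + sqrt pi * rGamma (b + 1/2) * kummerM b (1/2) (t^2))"
    by (rule sums_if[rotated])
  moreover have "(\<lambda>n. if even n then f (n div 2) else g ((n - 1) div 2)) = (\<lambda>n. vc b n * t ^ n)"
  proof
    fix n show "(if even n then f (n div 2) else g ((n - 1) div 2)) = vc b n * t ^ n"
      by (cases "even n") (auto simp: f_def g_def elim!: oddE)
  qed
  ultimately show ?thesis by (simp add: KV_def)
qed

lemma vc_summable: "summable (\<lambda>n. vc b n * t ^ n)"
  using vc_sums by (rule sums_summable)

lemma KV_eq: "KV b t = (\<Sum>n. vc b n * t ^ n)"
  using vc_sums by (rule sums_unique)



lemma P32: "pochhammer (3/2::real) m = (2 * real m + 1) * pochhammer (1/2) m"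
proof -
  have "pochhammer (1/2::real) (Suc m) = 1/2 * pochhammer (1/2 + 1) m" by (rule pochhammer_rec)
  moreover have "pochhammer (1/2::real) (Suc m) = (1/2 + real m) * pochhammer (1/2) m" by (rule pochhammer_rec')
  ultimately show ?thesis by (simp add: divide_simps) (simp add: algebra_simps)
qed

lemma Pshift: "pochhammer (b - 1/2 :: real) (Suc k) = (b - 1/2) * pochhammer (b + 1/2) k"
proof -
  have "pochhammer (b - 1/2 :: real) (Suc k) = (b - 1/2) * pochhammer (b - 1/2 + 1) k" by (rule pochhammer_rec)
  thus ?thesis by (simp add: algebra_simps)
qed

lemma Pshift2: "pochhammer (b :: real) (Suc k) = (b + k) * pochhammer b k"
  by (rule pochhammer_rec')

lemma P12_pos: "pochhammer (1/2::real) k > 0" by (intro pochhammer_pos) simp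
lemma P32_pos: "pochhammer (3/2::real) k > 0" by (intro pochhammer_pos) simp

lemma vc_even: "vc b (2*m) = sqrt pi * rGamma (b + 1/2) * (pochhammer b m / pochhammer (1/2) m / fact m)"
  by (simp add: vc_def)
lemma vc_odd: "vc b (2*m+1) = - 2 * sqrt pi * rGamma b * (pochhammer (b + 1/2) m / pochhammer (3/2) m / fact m)"
  by (simp add: vc_def)
lemma vc_odd': "vc b (Suc (2*m)) = - 2 * sqrt pi * rGamma b * (pochhammer (b + 1/2) m / pochhammer (3/2) m / fact m)"
  using vc_odd[of b m] by simp

lemma rG_shift: "(b - 1/2) * rGamma (b + 1/2) = rGamma (b - 1/2 :: real)"
  using rGamma_plus1[of "b - 1/2"] by (simp add: algebra_simps)

lemma vc_rec: "real (Suc n) * vc b (Suc n) - (if n = 0 then 0 else 2 * vc b (n - 1)) = - 2 * vc (b - 1/2) n"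
proof (cases "even n")
  case True
  then obtain m where n: "n = 2*m" by (auto elim!: evenE)
  show ?thesis
  proof (cases m)
    case 0 thus ?thesis using n by (simp add: vc_def)
  next
    case (Suc k)
    have A: "vc b (Suc n) = - 2 * sqrt pi * rGamma b * (pochhammer (b + 1/2) (Suc k) / pochhammer (3/2) (Suc k) / fact (Suc k))"
      using n Suc by (simp add: vc_def)
    have B: "vc b (n - 1) = - 2 * sqrt pi * rGamma b * (pochhammer (b + 1/2) k / pochhammer (3/2) k / fact k)"
      using n Suc vc_odd[of b k] by (simp add: numeral_eq_Suc)
    have C: "vc (b - 1/2) n = sqrt pi * rGamma b * (pochhammer (b - 1/2) (Suc k) / pochhammer (1/2) (Suc k) / fact (Suc k))"
      using n Suc by (simp add: vc_def)
    have Q: "pochhammer (1/2::real) k > 0" by (rule P12_pos)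
    have nz: "2 * real k + 1 \<noteq> 0" "2 * real k + 3 \<noteq> 0" "1/2 + real k \<noteq> 0" "real k + 1 \<noteq> 0" "1 + real k \<noteq> 0" "3 + 2 * real k \<noteq> 0" "1 + 2 * real k \<noteq> 0" by linarith+
    have P1: "pochhammer (1/2::real) (Suc k) = (1/2 + k) * pochhammer (1/2) k" by (rule pochhammer_rec')
    have D: "real (Suc n) = 2 * k + 3" using n Suc by simp
    have E: "(if n = 0 then 0 else 2 * vc b (n - 1)) = 2 * vc b (n-1)" using n Suc by simp
    show ?thesis using Q nz
      apply (subst E)
      apply (simp only: A B C D)
      apply (simp only: Pshift)
      apply (simp only: P32 Pshift2 fact_Suc)
      by (simp add: divide_simps) (simp add: algebra_simps)
  qed
next
  case False
  then obtain m where n: "n = 2*m+1" by (auto elim!: oddE)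
  have A: "vc b (Suc n) = sqrt pi * rGamma (b + 1/2) * (pochhammer b (Suc m) / pochhammer (1/2) (Suc m) / fact (Suc m))"
    using n by (simp add: vc_def)
  have B: "vc b (n - 1) = sqrt pi * rGamma (b + 1/2) * (pochhammer b m / pochhammer (1/2) m / fact m)"
    using n by (simp add: vc_def)
  have C: "vc (b - 1/2) n = - 2 * sqrt pi * rGamma (b - 1/2) * (pochhammer b m / pochhammer (3/2) m / fact m)"
    using n by (simp add: vc_def)
  have D: "real (Suc n) = 2 * m + 2" using n by simp
  have Q: "pochhammer (1/2::real) m > 0" by (rule P12_pos)
  have nz: "2 * real m + 1 \<noteq> 0" "2 * real m + 3 \<noteq> 0" "1/2 + real m \<noteq> 0" "real m + 1 \<noteq> 0" "1 + real m \<noteq> 0" "3 + 2 * real m \<noteq> 0" "1 + 2 * real m \<noteq> 0" by linarith+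
  have P1: "pochhammer (1/2::real) (Suc m) = (1/2 + m) * pochhammer (1/2) m" by (rule pochhammer_rec')
  have R: "rGamma (b - 1/2 :: real) = (b - 1/2) * rGamma (b + 1/2)" by (simp add: rG_shift)
  have E: "(if n = 0 then 0 else 2 * vc b (n - 1)) = 2 * vc b (n-1)" using n by simp
  show ?thesis using Q nz
    apply (subst E)
    apply (simp only: A B C D R)
    apply (simp only: P32 Pshift2 fact_Suc)
    by (simp add: divide_simps) (simp add: algebra_simps)
qed

lemma vc_ode: "real (Suc n) * real (Suc (Suc n)) * vc b (Suc (Suc n)) = (2 * real n + 4 * b) * vc b n"
proof (cases "even n")
  case True
  then obtain m where n: "n = 2*m" by (auto elim!: evenE)
  have A: "vc b (Suc (Suc n)) = sqrt pi * rGamma (b + 1/2) * (pochhammer b (Suc m) / pochhammer (1/2) (Suc m) / fact (Suc m))"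
    using n by (simp add: vc_def)
  have B: "vc b n = sqrt pi * rGamma (b + 1/2) * (pochhammer b m / pochhammer (1/2) m / fact m)"
    using n by (simp add: vc_def)
  have Q: "pochhammer (1/2::real) m > 0" by (rule P12_pos)
  have nz: "2 * real m + 1 \<noteq> 0" "2 * real m + 3 \<noteq> 0" "1/2 + real m \<noteq> 0" "real m + 1 \<noteq> 0" "1 + real m \<noteq> 0" "3 + 2 * real m \<noteq> 0" "1 + 2 * real m \<noteq> 0" by linarith+
  have P1: "pochhammer (1/2::real) (Suc m) = (1/2 + m) * pochhammer (1/2) m" by (rule pochhammer_rec')
  have D: "real n = 2 * real m" "real (Suc n) = 2 * real m + 1" "real (Suc (Suc n)) = 2 * real m + 2" using n by auto
  show ?thesis using Q nz
    apply (simp only: A B D)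
    apply (simp only: P32 Pshift2 fact_Suc)
    by (simp add: divide_simps) (simp add: algebra_simps)
next
  case False
  then obtain m where n: "n = 2*m+1" by (auto elim!: oddE)
  have A: "vc b (Suc (Suc n)) = - 2 * sqrt pi * rGamma b * (pochhammer (b + 1/2) (Suc m) / pochhammer (3/2) (Suc m) / fact (Suc m))"
    using n by (simp add: vc_def)
  have B: "vc b n = - 2 * sqrt pi * rGamma b * (pochhammer (b + 1/2) m / pochhammer (3/2) m / fact m)"
    using n by (simp add: vc_def)
  have Q: "pochhammer (1/2::real) m > 0" by (rule P12_pos)
  have nz: "2 * real m + 1 \<noteq> 0" "2 * real m + 3 \<noteq> 0" "1/2 + real m \<noteq> 0" "real m + 1 \<noteq> 0" "1 + real m \<noteq> 0" "3 + 2 * real m \<noteq> 0" "1 + 2 * real m \<noteq> 0" by linarith+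
  have P1: "pochhammer (1/2::real) (Suc m) = (1/2 + m) * pochhammer (1/2) m" by (rule pochhammer_rec')
  have D: "real n = 2 * real m + 1" "real (Suc n) = 2 * real m + 2" "real (Suc (Suc n)) = 2 * real m + 3" using n by auto
  show ?thesis using Q nz
    apply (simp only: A B D)
    apply (simp only: P32 Pshift2 fact_Suc)
    by (simp add: divide_simps) (simp add: algebra_simps)
qed



definition KV1 :: "real \<Rightarrow> real \<Rightarrow> real" where "KV1 b t = (\<Sum>n. diffs (vc b) n * t ^ n)"
definition KV2 :: "real \<Rightarrow> real \<Rightarrow> real" where "KV2 b t = (\<Sum>n. diffs (diffs (vc b)) n * t ^ n)"

lemma vc1_summable: "summable (\<lambda>n. diffs (vc b) n * t ^ n)"
  by (rule termdiff_converges_all) (rule vc_summable)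

lemma vc2_summable: "summable (\<lambda>n. diffs (diffs (vc b)) n * t ^ n)"
  by (rule termdiff_converges_all) (rule vc1_summable)

lemma KV_fun: "KV b = (\<lambda>t. \<Sum>n. vc b n * t ^ n)"
  by (rule ext) (rule KV_eq)

lemma KV_deriv: "(KV b has_real_derivative KV1 b t) (at t)"
  unfolding KV_fun KV1_def
  by (rule termdiffs_strong_converges_everywhere) (rule vc_summable)

lemma KV1_deriv: "(KV1 b has_real_derivative KV2 b t) (at t)"
proof -
  have "KV1 b = (\<lambda>t. \<Sum>n. diffs (vc b) n * t ^ n)" by (rule ext) (simp add: KV1_def)
  thus ?thesis unfolding KV2_def
    using termdiffs_strong_converges_everywhere[of "diffs (vc b)", OF vc1_summable] by simp
qed

lemma sums_shift1:
  fixes c :: "nat \<Rightarrow> real"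
  assumes "(\<lambda>n. c n * t ^ n) sums s"
  shows "(\<lambda>n. (if n = 0 then 0 else c (n - 1)) * t ^ n) sums (t * s)"
proof -
  have "(\<lambda>n. t * (c n * t ^ n)) sums (t * s)" by (rule sums_mult) (rule assms)
  hence "(\<lambda>n. (\<lambda>n. (if n = 0 then 0 else c (n - 1)) * t ^ n) (Suc n)) sums (t * s)"
    by (simp add: mult_ac)
  from sums_Suc[OF this] show ?thesis by simp
qed

lemma KV_rec: "KV1 b t - 2 * t * KV b t = - 2 * KV (b - 1/2) t"
proof -
  have s1: "(\<lambda>n. diffs (vc b) n * t ^ n) sums KV1 b t"
    unfolding KV1_def by (rule summable_sums) (rule vc1_summable)
  have s2: "(\<lambda>n. (if n = 0 then 0 else vc b (n - 1)) * t ^ n) sums (t * KV b t)"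
    by (rule sums_shift1) (rule vc_sums)
  have "(\<lambda>n. diffs (vc b) n * t ^ n - 2 * ((if n = 0 then 0 else vc b (n - 1)) * t ^ n)) sums (KV1 b t - 2 * (t * KV b t))"
    by (intro sums_diff sums_mult s1 s2)
  moreover have "(\<lambda>n. diffs (vc b) n * t ^ n - 2 * ((if n = 0 then 0 else vc b (n - 1)) * t ^ n))
      = (\<lambda>n. - 2 * (vc (b - 1/2) n * t ^ n))"
  proof
    fix n
    have "diffs (vc b) n - 2 * (if n = 0 then 0 else vc b (n - 1)) = - 2 * vc (b - 1/2) n"
      using vc_rec[of n b] unfolding diffs_def by (cases "n = 0") simp_all
    moreover have "I * t ^ n - 2 * (J * t ^ n) = (I - 2 * J) * t ^ n" for I J :: real
      by (simp add: algebra_simps)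
    ultimately show "diffs (vc b) n * t ^ n - 2 * ((if n = 0 then 0 else vc b (n - 1)) * t ^ n) = - 2 * (vc (b - 1/2) n * t ^ n)"
      by (metis mult.assoc)
  qed
  moreover have "(\<lambda>n. - 2 * (vc (b - 1/2) n * t ^ n)) sums (- 2 * KV (b - 1/2) t)"
    by (intro sums_mult vc_sums)
  ultimately show ?thesis using sums_unique2 by (metis mult.assoc)
qed

lemma KV_ode: "KV2 b t = 2 * t * KV1 b t + 4 * b * KV b t"
proof -
  have s1: "(\<lambda>n. diffs (diffs (vc b)) n * t ^ n) sums KV2 b t"
    unfolding KV2_def by (rule summable_sums) (rule vc2_summable)
  have s0: "(\<lambda>n. diffs (vc b) n * t ^ n) sums KV1 b t"
    unfolding KV1_def by (rule summable_sums) (rule vc1_summable)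
  have s2: "(\<lambda>n. (if n = 0 then 0 else diffs (vc b) (n - 1)) * t ^ n) sums (t * KV1 b t)"
    by (rule sums_shift1) (rule s0)
  have "(\<lambda>n. 2 * ((if n = 0 then 0 else diffs (vc b) (n - 1)) * t ^ n) + 4 * b * (vc b n * t ^ n))
       sums (2 * (t * KV1 b t) + 4 * b * KV b t)"
    by (intro sums_add sums_mult s2 vc_sums)
  moreover have "(\<lambda>n. 2 * ((if n = 0 then 0 else diffs (vc b) (n - 1)) * t ^ n) + 4 * b * (vc b n * t ^ n))
      = (\<lambda>n. diffs (diffs (vc b)) n * t ^ n)"
  proof
    fix n
    have "2 * (if n = 0 then 0 else diffs (vc b) (n - 1)) + 4 * b * vc b n = diffs (diffs (vc b)) n"
    proof (cases n)
      case 0 thus ?thesis using vc_ode[of 0 b] by (simp add: diffs_def)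
    next
      case (Suc k) thus ?thesis using vc_ode[of n b] by (simp add: diffs_def algebra_simps)
    qed
    moreover have "2 * (I * t ^ n) + 4 * b * (v * t ^ n) = (2 * I + 4 * b * v) * t ^ n" for I v :: real
      by (simp add: algebra_simps)
    ultimately show "2 * ((if n = 0 then 0 else diffs (vc b) (n - 1)) * t ^ n) + 4 * b * (vc b n * t ^ n)
      = diffs (diffs (vc b)) n * t ^ n" by metis
  qed
  ultimately have "(\<lambda>n. diffs (diffs (vc b)) n * t ^ n) sums (2 * (t * KV1 b t) + 4 * b * KV b t)" by simp
  with s1 show ?thesis using sums_unique2 by (metis mult.assoc)
qed



lemma neg_deriv:
  fixes f f1 q :: "real \<Rightarrow> real"
  assumes d1: "\<And>t. (f has_real_derivative f1 t) (at t)"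
    and d2: "\<And>t. (f1 has_real_derivative q t * f t) (at t)"
    and q: "\<And>t. t \<ge> c \<Longrightarrow> q t \<ge> 1"
    and pos: "\<And>t. t \<ge> c \<Longrightarrow> f t > 0"
    and bnd: "\<And>t. t \<ge> c \<Longrightarrow> f t \<le> B * exp (t / 2)"
  shows "\<And>t. t \<ge> c \<Longrightarrow> f1 t < 0"
    and "\<And>s u. c \<le> s \<Longrightarrow> s \<le> u \<Longrightarrow> f1 s \<le> f1 u"
proof -
  show mono: "\<And>s u. c \<le> s \<Longrightarrow> s \<le> u \<Longrightarrow> f1 s \<le> f1 u"
  proof -
    fix s u :: real assume "c \<le> s" "s \<le> u"
    thus "f1 s \<le> f1 u"
    proof (intro DERIV_nonneg_imp_nondecreasing[of s u f1])
      fix x assume "s \<le> x" "x \<le> u"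
      with \<open>c \<le> s\<close> have "x \<ge> c" by simp
      hence "q x * f x \<ge> 0" using q[of x] pos[of x] by simp
      thus "\<exists>y. (f1 has_real_derivative y) (at x) \<and> 0 \<le> y" using d2[of x] by blast
    qed
  qed
  fix t1 assume t1: "t1 \<ge> c"
  show "f1 t1 < 0"
  proof (rule ccontr)
    assume "\<not> f1 t1 < 0" hence f1t1: "f1 t1 \<ge> 0" by simp
    define A where "A = (f1 t1 + f t1) * exp (- t1)"
    have A: "A > 0" unfolding A_def using f1t1 pos[OF t1] by simp
    have B: "B > 0"
    proof -
      have "0 < f c" using pos by simp
      also have "\<dots> \<le> B * exp (c / 2)" using bnd by simp
      finally show ?thesis by (simp add: zero_less_mult_iff)
    qed
    have phi: "A \<le> (f1 t + f t) * exp (- t)" if "t \<ge> t1" for t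
      unfolding A_def
    proof (rule DERIV_nonneg_imp_nondecreasing[OF that])
      fix x assume x: "t1 \<le> x" "x \<le> t"
      have "((\<lambda>x. (f1 x + f x) * exp (- x)) has_real_derivative (q x - 1) * f x * exp (- x)) (at x)"
        by (auto intro!: derivative_eq_intros d1 d2 simp: algebra_simps)
      moreover have "(q x - 1) * f x * exp (- x) \<ge> 0" using q[of x] pos[of x] x t1 by simp
      ultimately show "\<exists>y. ((\<lambda>x. (f1 x + f x) * exp (- x)) has_real_derivative y) (at x) \<and> 0 \<le> y"
        by metis
    qed
    have psi: "f1 t \<le> f (t + 1) - f t" if "t \<ge> c" for t
    proof -
      have "f t - f1 t * t \<le> f (t + 1) - f1 t * (t + 1)"
      proof (rule DERIV_nonneg_imp_nondecreasing[of t "t + 1" "\<lambda>s. f s - f1 t * s"])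
        fix x assume x: "t \<le> x" "x \<le> t + 1"
        have "((\<lambda>s. f s - f1 t * s) has_real_derivative f1 x - f1 t * 1) (at x)"
          by (intro DERIV_diff d1 DERIV_cmult DERIV_ident)
        moreover have "f1 x - f1 t * 1 \<ge> 0" using mono[of t x] that x by simp
        ultimately show "\<exists>y. ((\<lambda>s. f s - f1 t * s) has_real_derivative y) (at x) \<and> 0 \<le> y" by blast
      qed simp
      thus ?thesis by (simp add: algebra_simps)
    qed
    define t where "t = max t1 (2 * ln (B / A) + 2)"
    have tt1: "t \<ge> t1" and tl: "t \<ge> 2 * ln (B / A) + 2" unfolding t_def by auto
    have tc: "t \<ge> c" using tt1 t1 by simp
    have "A * exp t \<le> f1 t + f t" using phi[OF tt1] by (simp add: exp_minus field_simps)
    also have "\<dots> \<le> f (t + 1)" using psi[OF tc] by simp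
    also have "\<dots> \<le> B * exp ((t + 1) / 2)" using bnd tc by simp
    finally have 1: "A * (exp (t/2) * exp (t/2)) \<le> B * (exp (t/2) * exp (1/2))"
      by (simp add: exp_add[symmetric] add_divide_distrib)
    hence "A * exp (t/2) \<le> B * exp (1/2)" using exp_gt_zero[of "t/2"]
      by (simp add: mult_ac)
    moreover have "exp (t/2) \<ge> exp (ln (B / A) + 1)" using tl by simp
    moreover have "exp (ln (B / A) + 1) = B / A * exp 1" using A B by (simp add: exp_add)
    ultimately have "A * (B / A * exp 1) \<le> B * exp (1/2)"
      by (smt (verit) A mult_left_mono)
    hence "exp (1::real) \<le> exp (1/2)" using A B by simp
    thus False by simp
  qed
qed



definition FF :: "real \<Rightarrow> real \<Rightarrow> real" where "FF b t = exp (- (t^2) / 2) * KV b t"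
definition FF1 :: "real \<Rightarrow> real \<Rightarrow> real" where "FF1 b t = exp (- (t^2) / 2) * (KV1 b t - t * KV b t)"

lemma FF_deriv: "(FF b has_real_derivative FF1 b t) (at t)"
proof -
  have "((\<lambda>t. exp (- (t^2) / 2) * KV b t) has_real_derivative FF1 b t) (at t)"
    unfolding FF1_def by (auto intro!: derivative_eq_intros KV_deriv simp: algebra_simps)
  thus ?thesis by (simp add: FF_def[abs_def])
qed

lemma FF1_deriv: "(FF1 b has_real_derivative (t^2 + 4 * b - 1) * FF b t) (at t)"
proof -
  have "((\<lambda>t. exp (- (t^2) / 2) * (KV1 b t - t * KV b t)) has_real_derivative
      exp (- (t^2) / 2) * (- t) * (KV1 b t - t * KV b t) + exp (- (t^2) / 2) * (KV2 b t - (KV b t + t * KV1 b t))) (at t)"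
    by (auto intro!: derivative_eq_intros KV_deriv KV1_deriv simp: algebra_simps)
  moreover have "exp (- (t^2) / 2) * (- t) * (KV1 b t - t * KV b t) + exp (- (t^2) / 2) * (KV2 b t - (KV b t + t * KV1 b t))
      = (t^2 + 4 * b - 1) * FF b t"
    unfolding FF_def KV_ode by (simp add: algebra_simps power2_eq_square)
  ultimately show ?thesis by (simp add: FF1_def[abs_def])
qed

lemma FF_shift: "FF (b - 1/2) t = (t * FF b t - FF1 b t) / 2"
proof -
  have e: "KV (b - 1/2) t = (2 * t * KV b t - KV1 b t) / 2" using KV_rec[of b t] by simp
  show ?thesis unfolding FF_def FF1_def e by (simp add: field_simps)
qed

definition Pgood :: "real \<Rightarrow> real \<Rightarrow> bool" where
  "Pgood c b \<longleftrightarrow> (\<forall>t\<ge>c. FF b t > 0) \<and> (\<forall>\<epsilon>>0. \<exists>B. \<forall>t\<ge>c. FF b t \<le> B * exp (\<epsilon> * t))"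

lemma t_le_exp: fixes \<epsilon> t :: real assumes "\<epsilon> > 0" "t \<ge> 0" shows "t \<le> (2 / \<epsilon>) * exp (\<epsilon> * t / 2)"
proof -
  have "1 + \<epsilon> * t / 2 \<le> exp (\<epsilon> * t / 2)" by (rule exp_ge_add_one_self)
  hence "\<epsilon> * t / 2 \<le> exp (\<epsilon> * t / 2)" by linarith
  hence "(2 / \<epsilon>) * (\<epsilon> * t / 2) \<le> (2 / \<epsilon>) * exp (\<epsilon> * t / 2)"
    using assms by (intro mult_left_mono) auto
  thus ?thesis using assms by simp
qed

lemma step:
  assumes c: "c > 0" and cb: "c^2 + 4 * b \<ge> 2" and P: "Pgood c b"
  shows "(\<forall>t\<ge>c. FF1 b t < 0) \<and> (\<forall>s u. c \<le> s \<longrightarrow> s \<le> u \<longrightarrow> FF1 b s \<le> FF1 b u) \<and> Pgood c (b - 1/2)"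
proof -
  have pos: "\<And>t. t \<ge> c \<Longrightarrow> FF b t > 0" using P by (simp add: Pgood_def)
  obtain B where B: "\<And>t. t \<ge> c \<Longrightarrow> FF b t \<le> B * exp ((1/2) * t)"
    using P unfolding Pgood_def by (meson half_gt_zero_iff zero_less_one)
  have q: "t^2 + 4 * b - 1 \<ge> 1" if "t \<ge> c" for t
  proof -
    have "c^2 \<le> t^2" using that c by (intro power_mono) auto
    thus ?thesis using cb by simp
  qed
  have neg: "\<And>t. t \<ge> c \<Longrightarrow> FF1 b t < 0"
   and mono: "\<And>s u. c \<le> s \<Longrightarrow> s \<le> u \<Longrightarrow> FF1 b s \<le> FF1 b u"
    using neg_deriv[of "FF b" "FF1 b" "\<lambda>t. t^2 + 4 * b - 1" c B, OF FF_deriv FF1_deriv q pos]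
      B by (auto simp: mult.commute)
  have pos': "\<forall>t\<ge>c. FF (b - 1/2) t > 0"
  proof (intro allI impI)
    fix t assume t: "t \<ge> c"
    have "t * FF b t > 0" using pos[OF t] t c by simp
    thus "FF (b - 1/2) t > 0" unfolding FF_shift using neg[OF t] by simp
  qed
  have bnd': "\<forall>\<epsilon>>0. \<exists>B. \<forall>t\<ge>c. FF (b - 1/2) t \<le> B * exp (\<epsilon> * t)"
  proof (intro allI impI)
    fix \<epsilon> :: real assume e: "\<epsilon> > 0"
    obtain B' where B': "\<And>t. t \<ge> c \<Longrightarrow> FF b t \<le> B' * exp ((\<epsilon>/2) * t)"
      using P e unfolding Pgood_def by (meson half_gt_zero_iff)
    define B'' where "B'' = max B' 0"
    show "\<exists>B. \<forall>t\<ge>c. FF (b - 1/2) t \<le> B * exp (\<epsilon> * t)"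
    proof (intro exI allI impI)
      fix t assume t: "t \<ge> c"
      have t0: "t \<ge> 0" using t c by simp
      have ex: "exp (\<epsilon> * t) = exp (\<epsilon> * t / 2) * exp (\<epsilon> * t / 2)"
        by (simp add: exp_add[symmetric])
      have "t * FF b t \<le> t * (B'' * exp ((\<epsilon>/2) * t))"
        using B'[OF t] t0 unfolding B''_def
        by (intro mult_left_mono) (auto intro: order.trans[OF _ mult_right_mono])
      also have "\<dots> = B'' * (t * exp (\<epsilon> * t / 2))" by (simp add: mult_ac)
      also have "\<dots> \<le> B'' * ((2 / \<epsilon>) * exp (\<epsilon> * t / 2) * exp (\<epsilon> * t / 2))"
        using t_le_exp[OF e t0] unfolding B''_def by (intro mult_left_mono mult_right_mono) auto
      also have "\<dots> = (2 / \<epsilon> * B'') * exp (\<epsilon> * t)" unfolding ex by (simp add: mult_ac)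
      finally have 1: "t * FF b t \<le> (2 / \<epsilon> * B'') * exp (\<epsilon> * t)" .
      have "- FF1 b t \<le> - FF1 b c" using mono[of c t] t by simp
      also have "\<dots> \<le> \<bar>FF1 b c\<bar>" by simp
      also have "\<dots> \<le> \<bar>FF1 b c\<bar> * exp (\<epsilon> * t)"
        using e t0 by (intro mult_le_cancel_left1[THEN iffD2]) (auto simp: one_le_exp_iff)
      finally have 2: "- FF1 b t \<le> \<bar>FF1 b c\<bar> * exp (\<epsilon> * t)" .
      have "FF (b - 1/2) t \<le> ((2 / \<epsilon> * B'') * exp (\<epsilon> * t) + \<bar>FF1 b c\<bar> * exp (\<epsilon> * t)) / 2"
        unfolding FF_shift using add_mono[OF 1 2] by (intro divide_right_mono) auto
      also have "\<dots> = ((2 / \<epsilon> * B'' + \<bar>FF1 b c\<bar>) / 2) * exp (\<epsilon> * t)" by (simp add: algebra_simps)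
      finally show "FF (b - 1/2) t \<le> ((2 / \<epsilon> * B'' + \<bar>FF1 b c\<bar>) / 2) * exp (\<epsilon> * t)" .
    qed
  qed
  show ?thesis using neg mono pos' bnd' by (auto simp: Pgood_def)
qed



lemma series_integral:
  fixes g :: "real \<Rightarrow> real" and a :: "nat \<Rightarrow> real" and fm :: "nat \<Rightarrow> real \<Rightarrow> real"
  assumes int: "\<And>m. (fm m has_integral a m) {0..}"
    and nn: "\<And>m u. u \<ge> 0 \<Longrightarrow> fm m u \<ge> 0"
    and pw: "\<And>u. u \<ge> 0 \<Longrightarrow> (\<lambda>m. fm m u) sums g u"
    and as: "a sums s"
  shows "(g has_integral s) {0..}"
proof -
  define S where "S k u = (\<Sum>m<k. fm m u)" for k u
  have a0: "a m \<ge> 0" for m using has_integral_nonneg[OF int[of m]] nn by auto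
  have Sint: "(S k has_integral (\<Sum>m<k. a m)) {0..}" for k
    unfolding S_def[abs_def] by (intro has_integral_sum) (auto intro: int)
  have intS: "integral {0..} (S k) = (\<Sum>m<k. a m)" for k using Sint by (rule integral_unique)
  have "g integrable_on {0..} \<and> ((\<lambda>k. integral {0..} (S k)) \<longlonglongrightarrow> integral {0..} g)"
  proof (rule monotone_convergence_increasing)
    show "S k integrable_on {0..}" for k using Sint by blast
    show "S k x \<le> S (Suc k) x" if "x \<in> {0..}" for k x using nn[of x k] that by (simp add: S_def)
    show "(\<lambda>k. S k x) \<longlonglongrightarrow> g x" if "x \<in> {0..}" for x
      using pw[of x] that by (simp add: S_def sums_def)
    have "\<bar>\<Sum>m<k. a m\<bar> \<le> s" for k
    proof -
      have "\<bar>\<Sum>m<k. a m\<bar> = (\<Sum>m<k. a m)" using a0 by (simp add: sum_nonneg)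
      also have "\<dots> \<le> suminf a" using as a0 by (intro sum_le_suminf) (auto simp: sums_summable)
      finally show ?thesis using as sums_unique by metis
    qed
    thus "bounded (range (\<lambda>k. integral {0..} (S k)))"
      unfolding bounded_real intS by auto
  qed
  moreover have "(\<lambda>k. integral {0..} (S k)) \<longlonglongrightarrow> s" using as unfolding intS sums_def .
  ultimately have "g integrable_on {0..}" "integral {0..} g = s" using LIMSEQ_unique by blast+
  thus ?thesis using integrable_integral by metis
qed

lemma cosh_series: "(\<lambda>m. x ^ (2*m) / fact (2*m)) sums cosh (x::real)"
proof -
  have "(\<lambda>m. (\<lambda>n. if even n then x ^ n /\<^sub>R fact n else 0) (2*m)) sums cosh x"
    by (subst sums_mono_reindex) (auto simp: strict_mono_def cosh_converges elim!: evenE)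
  thus ?thesis by (simp add: divide_inverse mult.commute)
qed

lemma sinh_series: "(\<lambda>m. x ^ (2*m+1) / fact (2*m+1)) sums sinh (x::real)"
proof -
  have "(\<lambda>m. (\<lambda>n. if even n then 0 else x ^ n /\<^sub>R fact n) (2*m+1)) sums sinh x"
  proof (subst sums_mono_reindex)
    show "strict_mono (\<lambda>m::nat. 2*m+1)" by (auto simp: strict_mono_def)
    show "\<And>n. n \<notin> range (\<lambda>m. 2 * m + 1) \<Longrightarrow> (if even n then 0 else x ^ n /\<^sub>R fact n) = 0"
      by (auto elim!: oddE)
  qed (rule sinh_converges)
  thus ?thesis by (simp add: divide_inverse mult.commute)
qed

lemma even_integral:
  assumes b: "b > 0"
  shows "((\<lambda>u. u powr (b - 1) / exp u * cosh (2 * t * sqrt u)) has_integral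
          Gamma b * kummerM b (1/2) (t^2)) {0..}"
proof (rule series_integral)
  let ?fm = "\<lambda>m u. (4 * t^2) ^ m / fact (2*m) * (u powr (b + real m - 1) / exp u)"
  show "(?fm m has_integral (Gamma b * (pochhammer b m / pochhammer (1/2) m / fact m * (t^2) ^ m))) {0..}" for m
  proof -
    have "(?fm m has_integral ((4 * t^2) ^ m / fact (2*m) * Gamma (b + real m))) {0..}"
      by (intro has_integral_mult_right Gamma_integral_real) (use b in simp)
    moreover have "(4 * t^2) ^ m / fact (2*m) * Gamma (b + real m)
        = Gamma b * (pochhammer b m / pochhammer (1/2) m / fact m * (t^2) ^ m)"
    proof -
      have "b \<notin> \<int>\<^sub>\<le>\<^sub>0" using b by (auto elim!: nonpos_Ints_cases)
      hence pg: "pochhammer b m = Gamma (b + real m) / Gamma b" by (rule pochhammer_Gamma)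
      have G: "Gamma b > 0" using b by simp
      have P: "pochhammer (1/2::real) m > 0" by (rule P12_pos)
      have e4: "(4 * t^2) ^ m = 2 ^ (2*m) * (t^2) ^ m" by (simp add: power_mult power_mult_distrib)
      have "(4 * t^2) ^ m / fact (2*m) * Gamma (b + real m)
          = 2 ^ (2*m) * (t^2) ^ m / (2 ^ (2*m) * pochhammer (1/2) m * fact m) * Gamma (b + real m)"
        by (simp only: e4 fact_double)
      also have "\<dots> = Gamma b * (Gamma (b + real m) / Gamma b / pochhammer (1/2) m / fact m * (t^2) ^ m)"
        using G P by (simp add: field_simps)
      finally show ?thesis by (simp only: pg)
    qed
    ultimately show ?thesis by simp
  qed
  show "?fm m u \<ge> 0" if "u \<ge> 0" for m u by simp
  show "(\<lambda>m. ?fm m u) sums (u powr (b - 1) / exp u * cosh (2 * t * sqrt u))" if u: "u \<ge> 0" for u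
  proof -
    have "(\<lambda>m. u powr (b - 1) / exp u * ((2 * t * sqrt u) ^ (2*m) / fact (2*m))) sums
        (u powr (b - 1) / exp u * cosh (2 * t * sqrt u))"
      by (intro sums_mult cosh_series)
    moreover have "u powr (b - 1) / exp u * ((2 * t * sqrt u) ^ (2*m) / fact (2*m)) = ?fm m u" for m
    proof (cases "u = 0")
      case True thus ?thesis by simp
    next
      case False
      hence up: "u > 0" using u by simp
      have "(2 * t * sqrt u) ^ (2*m) = (4 * t^2) ^ m * u ^ m"
        using u by (simp add: power_mult power_mult_distrib)
      moreover have "u powr (b + real m - 1) = u powr (b - 1) * u ^ m"
        using up by (simp add: powr_add[symmetric] powr_realpow[symmetric] algebra_simps)
      ultimately show ?thesis by (simp add: mult_ac)
    qed
    ultimately show ?thesis by simp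
  qed
  show "(\<lambda>m. Gamma b * (pochhammer b m / pochhammer (1/2) m / fact m * (t^2) ^ m)) sums
      (Gamma b * kummerM b (1/2) (t^2))"
    by (intro sums_mult kummer_sums) simp
qed

lemma odd_integral:
  assumes b: "b > 0" and t: "t \<ge> 0"
  shows "((\<lambda>u. u powr (b - 1) / exp u * sinh (2 * t * sqrt u)) has_integral
          2 * t * Gamma (b + 1/2) * kummerM (b + 1/2) (3/2) (t^2)) {0..}"
proof (rule series_integral)
  let ?fm = "\<lambda>m u. (2 * t) ^ (2*m+1) / fact (2*m+1) * (u powr (b + 1/2 + real m - 1) / exp u)"
  show "(?fm m has_integral (2 * t * Gamma (b + 1/2) * (pochhammer (b + 1/2) m / pochhammer (3/2) m / fact m * (t^2) ^ m))) {0..}" for m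
  proof -
    have "(?fm m has_integral ((2 * t) ^ (2*m+1) / fact (2*m+1) * Gamma (b + 1/2 + real m))) {0..}"
      by (intro has_integral_mult_right Gamma_integral_real) (use b in simp)
    moreover have "(2 * t) ^ (2*m+1) / fact (2*m+1) * Gamma (b + 1/2 + real m)
        = 2 * t * Gamma (b + 1/2) * (pochhammer (b + 1/2) m / pochhammer (3/2) m / fact m * (t^2) ^ m)"
    proof -
      have "b + 1/2 \<notin> \<int>\<^sub>\<le>\<^sub>0" using b by (auto elim!: nonpos_Ints_cases)
      hence pg: "pochhammer (b + 1/2) m = Gamma (b + 1/2 + real m) / Gamma (b + 1/2)" by (rule pochhammer_Gamma)
      have G: "Gamma (b + 1/2) > 0" using b by simp
      have P: "pochhammer (1/2::real) m > 0" by (rule P12_pos)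
      have e4: "(2 * t) ^ (2*m+1) = 2 * t * (2 ^ (2*m) * (t^2) ^ m)" by (simp add: power_mult power_mult_distrib)
      have f: "fact (2*m+1) = (2 * real m + 1) * (2 ^ (2*m) * pochhammer (1/2) m * fact m)"
      proof -
        have f0: "fact (2*m+1) = (2 * real m + 1) * (fact (2*m) :: real)" by (simp add: algebra_simps)
        show ?thesis by (simp only: f0 fact_double)
      qed
      have "(2 * t) ^ (2*m+1) / fact (2*m+1) * Gamma (b + 1/2 + real m)
          = 2 * t * (2 ^ (2*m) * (t^2) ^ m) / ((2 * real m + 1) * (2 ^ (2*m) * pochhammer (1/2) m * fact m)) * Gamma (b + 1/2 + real m)"
        by (simp only: e4 f)
      also have "\<dots> = 2 * t * Gamma (b + 1/2) * (Gamma (b + 1/2 + real m) / Gamma (b + 1/2) / ((2 * real m + 1) * pochhammer (1/2) m) / fact m * (t^2) ^ m)"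
        using G P by (simp add: divide_simps)
      finally show ?thesis by (simp only: pg P32)
    qed
    ultimately show ?thesis by simp
  qed
  show "?fm m u \<ge> 0" if "u \<ge> 0" for m u using t by simp
  show "(\<lambda>m. ?fm m u) sums (u powr (b - 1) / exp u * sinh (2 * t * sqrt u))" if u: "u \<ge> 0" for u
  proof -
    have "(\<lambda>m. u powr (b - 1) / exp u * ((2 * t * sqrt u) ^ (2*m+1) / fact (2*m+1))) sums
        (u powr (b - 1) / exp u * sinh (2 * t * sqrt u))"
      by (intro sums_mult sinh_series)
    moreover have "u powr (b - 1) / exp u * ((2 * t * sqrt u) ^ (2*m+1) / fact (2*m+1)) = ?fm m u" for m
    proof (cases "u = 0")
      case True thus ?thesis by simp
    next
      case False
      hence up: "u > 0" using u by simp
      have "(2 * t * sqrt u) ^ (2*m+1) = (2 * t) ^ (2*m+1) * (u ^ m * sqrt u)"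
        using u by (simp add: power_mult power_mult_distrib)
      moreover have "u powr (b + 1/2 + real m - 1) = u powr (b - 1) * (u ^ m * sqrt u)"
      proof -
        have "u powr (b + 1/2 + real m - 1) = u powr (b - 1) * u powr (real m) * u powr (1/2)"
          by (simp add: powr_add[symmetric] algebra_simps)
        thus ?thesis using up by (simp add: powr_realpow powr_half_sqrt mult_ac)
      qed
      ultimately show ?thesis by (simp add: mult_ac)
    qed
    ultimately show ?thesis by simp
  qed
  show "(\<lambda>m. 2 * t * Gamma (b + 1/2) * (pochhammer (b + 1/2) m / pochhammer (3/2) m / fact m * (t^2) ^ m)) sums
      (2 * t * Gamma (b + 1/2) * kummerM (b + 1/2) (3/2) (t^2))"
    by (intro sums_mult kummer_sums) simp
qed

lemma KV_integral:
  assumes b: "b > 0" and t: "t \<ge> 0"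
  shows "((\<lambda>u. u powr (b - 1) / exp u * exp (- (2 * t * sqrt u))) has_integral
          Gamma b * Gamma (b + 1/2) / sqrt pi * KV b t) {0..}"
proof -
  have "((\<lambda>u. u powr (b - 1) / exp u * cosh (2 * t * sqrt u) - u powr (b - 1) / exp u * sinh (2 * t * sqrt u)) has_integral
        Gamma b * kummerM b (1/2) (t^2) - 2 * t * Gamma (b + 1/2) * kummerM (b + 1/2) (3/2) (t^2)) {0..}"
    by (intro has_integral_diff even_integral odd_integral b t)
  moreover have "Gamma b * kummerM b (1/2) (t^2) - 2 * t * Gamma (b + 1/2) * kummerM (b + 1/2) (3/2) (t^2)
      = Gamma b * Gamma (b + 1/2) / sqrt pi * KV b t"
  proof -
    have "Gamma b > 0" "Gamma (b + 1/2) > 0" using b by simp_all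
    hence "Gamma b * rGamma b = 1" "Gamma (b + 1/2) * rGamma (b + 1/2) = 1"
      by (simp_all add: rGamma_inverse_Gamma)
    thus ?thesis unfolding KV_def by (simp add: field_simps)
  qed
  moreover have "u powr (b - 1) / exp u * cosh (2 * t * sqrt u) - u powr (b - 1) / exp u * sinh (2 * t * sqrt u)
      = u powr (b - 1) / exp u * exp (- (2 * t * sqrt u))" for u
    by (metis right_diff_distrib cosh_minus_sinh)
  ultimately show ?thesis by simp
qed



lemma KV_pos_bound:
  assumes b: "b > 0" and t: "t \<ge> 0"
  shows "KV b t > 0" "KV b t \<le> sqrt pi / Gamma (b + 1/2)"
proof -
  define g :: "real \<Rightarrow> real" where "g u = u powr (b - 1) / exp u * exp (- (2 * t * sqrt u))" for u
  define C where "C = Gamma b * Gamma (b + 1/2) / sqrt pi"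
  have C: "C > 0" unfolding C_def using b by simp
  have I: "(g has_integral C * KV b t) {0..}" unfolding g_def C_def by (rule KV_integral[OF b t])
  have "continuous_on {1..2} g" unfolding g_def by (intro continuous_intros) auto
  hence "integral {1..2::real} (\<lambda>u. 0) < integral {1..2} g"
    by (intro integral_less_real) (auto simp: g_def)
  also have "integral {1..2} g \<le> integral {0..} g"
  proof (rule integral_subset_le)
    show "g integrable_on {1..2}" using \<open>continuous_on {1..2} g\<close> by (rule integrable_continuous_real)
    show "g integrable_on {0..}" using I by blast
  qed (auto simp: g_def)
  also have "\<dots> = C * KV b t" using I by (rule integral_unique)
  finally have "C * KV b t > 0" by simp
  thus "KV b t > 0" using C by (simp add: zero_less_mult_iff)
  have "C * KV b t \<le> Gamma b"
  proof (rule has_integral_le[OF I Gamma_integral_real[OF b]])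
    fix u :: real assume u: "u \<in> {0..}"
    have "exp (- (2 * t * sqrt u)) \<le> 1" using u t by simp
    thus "g u \<le> u powr (b - 1) / exp u" unfolding g_def
      by (intro mult_left_le) auto
  qed
  thus "KV b t \<le> sqrt pi / Gamma (b + 1/2)" using b unfolding C_def by (simp add: field_simps)
qed

lemma base:
  assumes b: "b > 0" and c: "c > 0"
  shows "Pgood c b"
  unfolding Pgood_def
proof (intro conjI allI impI)
  fix t assume t: "t \<ge> c"
  thus "FF b t > 0" using KV_pos_bound(1)[OF b] c unfolding FF_def by simp
next
  fix \<epsilon> :: real assume e: "\<epsilon> > 0"
  show "\<exists>B. \<forall>t\<ge>c. FF b t \<le> B * exp (\<epsilon> * t)"
  proof (intro exI allI impI)
    fix t assume t: "t \<ge> c"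
    have t0: "t \<ge> 0" using t c by simp
    have "FF b t \<le> KV b t" unfolding FF_def using KV_pos_bound(1)[OF b t0]
      by (intro mult_left_le_one_le) auto
    also have "\<dots> \<le> sqrt pi / Gamma (b + 1/2)" using KV_pos_bound(2)[OF b t0] .
    also have "\<dots> \<le> sqrt pi / Gamma (b + 1/2) * exp (\<epsilon> * t)"
    proof -
      have "sqrt pi / Gamma (b + 1/2) \<ge> 0" using b by simp
      moreover have "exp (\<epsilon> * t) \<ge> 1" using e t0 by (simp add: one_le_exp_iff)
      ultimately show ?thesis using mult_left_mono[of 1 "exp (\<epsilon> * t)" "sqrt pi / Gamma (b + 1/2)"] by simp
    qed
    finally show "FF b t \<le> sqrt pi / Gamma (b + 1/2) * exp (\<epsilon> * t)" .
  qed
qed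



lemma Gamma_minus_half: "Gamma (-1/2 :: real) = - 2 * sqrt pi"
proof -
  have "(-1/2) * rGamma (-1/2 + 1) = rGamma (-1/2 :: real)" by (rule rGamma_plus1)
  hence "rGamma (-1/2 :: real) = (-1/2) * inverse (sqrt pi)"
    by (simp add: rGamma_inverse_Gamma Gamma_one_half_real)
  hence "Gamma (-1/2 :: real) = inverse ((-1/2) * inverse (sqrt pi))"
    by (metis inverse_inverse_eq rGamma_inverse_Gamma)
  thus ?thesis by (simp add: field_simps)
qed

lemma tricomi_KV:
  assumes s: "s > 0"
  shows "tricomiU a (1/2) (s^2) = KV a s"
proof -
  have A: "Gamma (1 - 1/2::real) = sqrt pi" by (simp add: Gamma_one_half_real)
  have B: "rGamma (a - 1/2 + 1) = rGamma (a + 1/2)" by (rule arg_cong[where f=rGamma]) simp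
  have C: "Gamma (1/2 - 1::real) = - 2 * sqrt pi" using Gamma_minus_half by simp
  have D: "(s^2) powr (1 - 1/2) = s" using s by (simp add: powr_half_sqrt)
  have E: "1 + a - 1/2 = a + 1/2" "2 - 1/2 = (3/2::real)" by simp_all
  show ?thesis unfolding tricomiU_def KV_def
    by (simp only: A B C D E)
qed

theorem lemma3p15:
  fixes \<mu> \<gamma> :: real and h :: "real \<Rightarrow> real"
  assumes "\<mu> > 0" and "\<gamma> > 0"
    and h_def: "\<And>x. h x = exp (- \<gamma> * x / \<mu> - \<mu> * x\<^sup>2) *
        tricomiU (- \<gamma>\<^sup>2 / (4 * \<mu> ^ 3) + 1 / 2) (1 / 2)
                 ((\<gamma> / \<mu> powr (3 / 2) + sqrt \<mu> * x)\<^sup>2)"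
  shows "(\<forall>x\<ge>0. h x > 0)
       \<and> (\<exists>h1 h2. (\<forall>x\<ge>0. (h has_real_derivative h1 x) (at x within {0..}))
                 \<and> (\<forall>x\<ge>0. (h1 has_real_derivative h2 x) (at x within {0..}))
                 \<and> h2 0 = 0
                 \<and> (\<forall>x>0. h1 x < 0))
       \<and> h integrable_on {0..}"
proof -
  have mu: "\<mu> > 0" and ga: "\<gamma> > 0" using assms by auto
  define c where "c = \<gamma> / \<mu> powr (3/2)"
  define a where "a = - \<gamma>\<^sup>2 / (4 * \<mu> ^ 3) + 1 / 2"
  have sm: "sqrt \<mu> > 0" using mu by simp
  have ssm: "sqrt \<mu> * sqrt \<mu> = \<mu>" using mu by simp
  have mp: "\<mu> powr (3/2) = \<mu> * sqrt \<mu>"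
  proof -
    have e: "(3/2::real) = 1 + 1/2" by simp
    have "\<mu> powr (3/2) = \<mu> powr 1 * \<mu> powr (1/2)" unfolding e by (rule powr_add)
    also have "\<dots> = \<mu> * sqrt \<mu>" using mu by (simp add: powr_half_sqrt)
    finally show ?thesis .
  qed
  have c_eq: "c = \<gamma> / (\<mu> * sqrt \<mu>)" unfolding c_def mp ..
  have c: "c > 0" unfolding c_eq using mu ga by simp
  have csm: "c * sqrt \<mu> = \<gamma> / \<mu>" unfolding c_eq using sm mu by (simp add: field_simps)
  have ca: "c^2 + 4 * a = 2"
  proof -
    have "c^2 = \<gamma>^2 / (\<mu> * \<mu> * (sqrt \<mu> * sqrt \<mu>))" unfolding c_eq by (simp add: power2_eq_square)
    also have "\<dots> = \<gamma>^2 / \<mu>^3" unfolding ssm by (simp add: power3_eq_cube)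
    finally show ?thesis unfolding a_def using mu by (simp add: field_simps)
  qed
  define n where "n = nat \<lceil>- 2 * a\<rceil> + 1"
  have n: "a + real n / 2 > 0"
  proof -
    have "- 2 * a \<le> real (nat \<lceil>- 2 * a\<rceil>)" by (rule real_nat_ceiling_ge)
    thus ?thesis unfolding n_def by (simp add: field_simps)
  qed
  have chain: "Pgood c (a + real (n - i) / 2)" if "i \<le> n" for i
    using that
  proof (induction i)
    case 0 thus ?case using base[OF _ c] n by simp
  next
    case (Suc i)
    hence P: "Pgood c (a + real (n - i) / 2)" by simp
    have cb: "c^2 + 4 * (a + real (n - i) / 2) \<ge> 2" using ca by simp
    have "Pgood c (a + real (n - i) / 2 - 1/2)" using step[OF c cb P] by blast
    moreover have "a + real (n - i) / 2 - 1/2 = a + real (n - Suc i) / 2"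
      using Suc.prems by (simp add: of_nat_diff field_simps)
    ultimately show ?case by metis
  qed
  have Pa: "Pgood c a" using chain[of n] by simp
  have stepa: "(\<forall>t\<ge>c. FF1 a t < 0) \<and> (\<forall>s u. c \<le> s \<longrightarrow> s \<le> u \<longrightarrow> FF1 a s \<le> FF1 a u)"
    using step[OF c _ Pa] ca by simp
  have neg: "\<And>t. t \<ge> c \<Longrightarrow> FF1 a t < 0" using stepa by blast
  have pos: "\<And>t. t \<ge> c \<Longrightarrow> FF a t > 0" using Pa by (simp add: Pgood_def)
  have decr: "FF a u \<le> FF a s" if "c \<le> s" "s \<le> u" for s u
  proof (rule DERIV_nonpos_imp_nonincreasing[OF that(2)])
    fix x assume "s \<le> x" "x \<le> u"
    hence "FF1 a x \<le> 0" using neg[of x] that by simp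
    thus "\<exists>y. (FF a has_real_derivative y) (at x) \<and> y \<le> 0" using FF_deriv by blast
  qed
  define E where "E t = exp (c * t - t^2 / 2)" for t
  define G where "G t = E t * FF a t" for t
  define G1 where "G1 t = E t * ((c - t) * FF a t + FF1 a t)" for t
  define G2 where "G2 t = E t * (((c - t)^2 + t^2 + 4 * a - 2) * FF a t + 2 * (c - t) * FF1 a t)" for t
  have E_deriv: "(E has_real_derivative E t * (c - t)) (at t)" for t
    unfolding E_def[abs_def] by (auto intro!: derivative_eq_intros simp: algebra_simps)
  have G_deriv: "(G has_real_derivative G1 t) (at t)" for t
  proof -
    have "((\<lambda>t. E t * FF a t) has_real_derivative E t * (c - t) * FF a t + FF1 a t * E t) (at t)"
      by (rule DERIV_mult[OF E_deriv FF_deriv])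
    moreover have "E t * (c - t) * FF a t + FF1 a t * E t = G1 t" unfolding G1_def by (simp add: algebra_simps)
    ultimately show ?thesis by (simp add: G_def[abs_def])
  qed
  have G1_deriv: "(G1 has_real_derivative G2 t) (at t)" for t
  proof -
    have "((\<lambda>t. (c - t) * FF a t + FF1 a t) has_real_derivative
        (- 1) * FF a t + FF1 a t * (c - t) + (t^2 + 4 * a - 1) * FF a t) (at t)"
    proof -
      have l: "((\<lambda>t. c - t) has_real_derivative - 1) (at t)" by (auto intro!: derivative_eq_intros)
      show ?thesis by (intro DERIV_add DERIV_mult[OF l FF_deriv] FF1_deriv)
    qed
    hence "((\<lambda>t. E t * ((c - t) * FF a t + FF1 a t)) has_real_derivative
        E t * (c - t) * ((c - t) * FF a t + FF1 a t) +
        ((- 1) * FF a t + FF1 a t * (c - t) + (t^2 + 4 * a - 1) * FF a t) * E t) (at t)"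
      by (rule DERIV_mult[OF E_deriv])
    moreover have "E t * (c - t) * ((c - t) * FF a t + FF1 a t) +
        ((- 1) * FF a t + FF1 a t * (c - t) + (t^2 + 4 * a - 1) * FF a t) * E t = G2 t"
      unfolding G2_def by (simp add: algebra_simps power2_eq_square)
    ultimately show ?thesis by (simp add: G1_def[abs_def])
  qed
  have Epos: "E t > 0" for t unfolding E_def by simp
  have hG: "h x = G (c + sqrt \<mu> * x)" if x: "x \<ge> 0" for x
  proof -
    define s where "s = c + sqrt \<mu> * x"
    have s: "s > 0" unfolding s_def using c sm x by (simp add: add_pos_nonneg)
    have "h x = exp (- \<gamma> * x / \<mu> - \<mu> * x\<^sup>2) * tricomiU a (1/2) (s^2)"
      unfolding h_def a_def s_def c_def by simp
    also have "\<dots> = exp (- \<gamma> * x / \<mu> - \<mu> * x\<^sup>2) * KV a s" using tricomi_KV[OF s] by simp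
    also have "- \<gamma> * x / \<mu> - \<mu> * x\<^sup>2 = (c * s - s^2 / 2) + (- (s^2) / 2)"
    proof -
      have "c * s - s^2 = - (c * sqrt \<mu>) * x - (sqrt \<mu> * sqrt \<mu>) * x^2"
        unfolding s_def by (simp add: algebra_simps power2_eq_square)
      also have "\<dots> = - \<gamma> * x / \<mu> - \<mu> * x\<^sup>2" unfolding csm ssm by simp
      finally show ?thesis by linarith
    qed
    also have "exp ((c * s - s^2 / 2) + (- (s^2) / 2)) * KV a s = G s"
      unfolding G_def E_def FF_def by (simp add: exp_add[symmetric])
    finally show ?thesis unfolding s_def .
  qed
  define h1 where "h1 x = G1 (c + sqrt \<mu> * x) * sqrt \<mu>" for x
  define h2 where "h2 x = G2 (c + sqrt \<mu> * x) * sqrt \<mu> * sqrt \<mu>" for x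
  have lin: "((\<lambda>x. c + sqrt \<mu> * x) has_real_derivative sqrt \<mu>) (at x)" for x
    by (auto intro!: derivative_eq_intros)
  have H_deriv: "((\<lambda>x. G (c + sqrt \<mu> * x)) has_real_derivative h1 x) (at x)" for x
    unfolding h1_def by (rule DERIV_chain2[OF G_deriv lin])
  have h_deriv: "(h has_real_derivative h1 x) (at x within {0..})" if "x \<ge> 0" for x
  proof (rule has_field_derivative_transform_within[OF _ zero_less_one])
    show "((\<lambda>x. G (c + sqrt \<mu> * x)) has_real_derivative h1 x) (at x within {0..})"
      by (rule has_field_derivative_at_within[OF H_deriv])
    show "x \<in> {0..}" using that by simp
    show "\<And>y. y \<in> {0..} \<Longrightarrow> dist y x < 1 \<Longrightarrow> G (c + sqrt \<mu> * y) = h y" using hG by simp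
  qed
  have h1_deriv: "(h1 has_real_derivative h2 x) (at x within {0..})" for x
  proof -
    have "((\<lambda>x. G1 (c + sqrt \<mu> * x)) has_real_derivative G2 (c + sqrt \<mu> * x) * sqrt \<mu>) (at x)"
      by (rule DERIV_chain2[OF G1_deriv lin])
    hence "((\<lambda>x. G1 (c + sqrt \<mu> * x) * sqrt \<mu>) has_real_derivative G2 (c + sqrt \<mu> * x) * sqrt \<mu> * sqrt \<mu>) (at x)"
      by (rule DERIV_cmult_right)
    thus ?thesis unfolding h1_def[abs_def] h2_def by (rule has_field_derivative_at_within)
  qed
  have h2_0: "h2 0 = 0" unfolding h2_def G2_def using ca by (simp add: algebra_simps)
  have h1_neg: "h1 x < 0" if "x > 0" for x
  proof -
    define s where "s = c + sqrt \<mu> * x"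
    have s: "s > c" unfolding s_def using sm that by simp
    have "(c - s) * FF a s < 0" using pos[of s] s by (simp add: mult_neg_pos)
    hence "(c - s) * FF a s + FF1 a s < 0" using neg[of s] s by simp
    hence "G1 s < 0" unfolding G1_def using Epos[of s] by (simp add: mult_pos_neg)
    thus ?thesis unfolding h1_def s_def[symmetric] using sm by (simp add: mult_neg_pos)
  qed
  have h_pos: "h x > 0" if "x \<ge> 0" for x
  proof -
    have "c + sqrt \<mu> * x \<ge> c" using sm that by simp
    thus ?thesis unfolding hG[OF that] G_def using pos Epos by simp
  qed
  have h_int: "h integrable_on {0..}"
  proof (rule measurable_bounded_by_integrable_imp_integrable)
    have "continuous_on {0..} h" by (rule DERIV_continuous_on[OF h_deriv]) simp
    thus "h \<in> borel_measurable (lebesgue_on {0..})"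
      by (rule continuous_imp_measurable_on_sets_lebesgue) simp
    show "{0::real..} \<in> sets lebesgue" by simp
    define K where "K = FF a c * exp (c^2 / 2) * exp (1 / (2 * \<mu>))"
    show "(\<lambda>x. exp (- 1 * x) * K) integrable_on {0..}"
      by (intro integrable_on_mult_left integrable_on_exp_minus_to_infinity) simp
    show "norm (h x) \<le> exp (- 1 * x) * K" if x: "x \<in> {0..}" for x
    proof -
      define s where "s = c + sqrt \<mu> * x"
      have x0: "x \<ge> 0" using x by simp
      have s: "s \<ge> c" unfolding s_def using sm x0 by simp
      have "norm (h x) = h x" using h_pos[OF x0] by simp
      also have "\<dots> = E s * FF a s" unfolding hG[OF x0] G_def s_def ..
      also have "\<dots> \<le> E s * FF a c" using decr[OF order_refl s] Epos[of s] by simp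
      also have "E s \<le> exp (c^2 / 2 + 1 / (2 * \<mu>) - x)"
      proof -
        have "c * s - s^2 / 2 = c^2 / 2 - (sqrt \<mu> * sqrt \<mu>) * x^2 / 2"
          unfolding s_def by (simp add: algebra_simps power2_eq_square)
        also have "\<dots> = c^2 / 2 - \<mu> * x^2 / 2" unfolding ssm ..
        also have "\<dots> \<le> c^2 / 2 + 1 / (2 * \<mu>) - x"
        proof -
          have "0 \<le> (\<mu> * x - 1)^2 / (2 * \<mu>)" using mu by simp
          also have "(\<mu> * x - 1)^2 / (2 * \<mu>) = \<mu> * x^2 / 2 - x + 1 / (2 * \<mu>)"
            using mu by (simp add: field_simps power2_eq_square)
          finally show ?thesis by simp
        qed
        finally show ?thesis unfolding E_def by simp
      qed
      hence "E s * FF a c \<le> exp (c^2 / 2 + 1 / (2 * \<mu>) - x) * FF a c"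
        using pos[of c] by (intro mult_right_mono) auto
      also have "\<dots> = exp (- 1 * x) * K"
      proof -
        have "exp (- 1 * x) * (exp (c^2 / 2) * exp (1 / (2 * \<mu>))) = exp (- 1 * x + (c^2 / 2 + 1 / (2 * \<mu>)))"
          by (simp only: exp_add)
        also have "- 1 * x + (c^2 / 2 + 1 / (2 * \<mu>)) = c^2 / 2 + 1 / (2 * \<mu>) - x" by simp
        finally show ?thesis unfolding K_def by (simp add: mult_ac)
      qed
      finally show ?thesis .
    qed
  qed
  show ?thesis
    using h_pos h_deriv h1_deriv h2_0 h1_neg h_int by blast
qed


end
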